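(* Let $a,b$ be integers with $0<b<a$, let $S=\langle a,a+1,\ldots,a+b\rangle$ with conductor $c$, and let $m\ge 2c-1$. Let $M$ be an $(S,m,r)$-amenable set whose shadow $L_M$ has $t$ elements. Then there exists an $(S,m,r)$-amenable set $T$ whose shadow $L_T$ is an interval of integers containing $m$ and satisfies $\sharp L_T\le\sharp L_M$.
   Context: For $x\in S$, $\mathrm D(x)=\{\alpha\in S\mid x-\alpha\in S\}$. A set $M=\{m_1<\cdots<m_r\}\subseteq S$ with $2c-1\le m=m_1$ is $(S,m,r)$-amenable if $\mathrm D(m_i)\cap[m,\infty)\subseteq M$ for all $i$. The ground is $\{m,m+1,\ldots,m+a+b-1\}$, and the shadow of $M$ is $M\cap\{m,\ldots,m+a+b-1\}$. *)

theory Defs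
  imports Main
begin

inductive_set gen_semigroup :: "nat set \<Rightarrow> nat set" for G where
  zero: "0 \<in> gen_semigroup G"
| gen: "g \<in> G \<Longrightarrow> g \<in> gen_semigroup G"
| add: "x \<in> gen_semigroup G \<Longrightarrow> y \<in> gen_semigroup G \<Longrightarrow> x + y \<in> gen_semigroup G"

definition interval_semigroup :: "nat \<Rightarrow> nat \<Rightarrow> nat set" where
  "interval_semigroup a b = gen_semigroup {a..a+b}"

definition conductor :: "nat set \<Rightarrow> nat" where
  "conductor S = (LEAST c. \<forall>n\<ge>c. n \<in> S)"

definition Dset :: "nat set \<Rightarrow> nat \<Rightarrow> nat set" where
  "Dset S x = {\<alpha> \<in> S. \<alpha> \<le> x \<and> x - \<alpha> \<in> S}"

(* M = {m_1 < ... < m_r} subset of S, m = m_1, 2c-1 <= m, D(m_i) \<inter> [m,\<infinity>) \<subseteq> M *)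
definition amenable :: "nat set \<Rightarrow> nat \<Rightarrow> nat \<Rightarrow> nat set \<Rightarrow> bool" where
  "amenable S m r M \<longleftrightarrow>
     finite M \<and> card M = r \<and> M \<subseteq> S \<and> m \<in> M \<and> (\<forall>x\<in>M. m \<le> x) \<and>
     2 * conductor S \<le> m + 1 \<and>
     (\<forall>x\<in>M. Dset S x \<inter> {m..} \<subseteq> M)"

definition shadow :: "nat \<Rightarrow> nat \<Rightarrow> nat \<Rightarrow> nat set \<Rightarrow> nat set" where
  "shadow a b m M = M \<inter> {m..<m+a+b}"

end

theory Submission
  imports Defs
begin

lemma gs_gen: "a \<le> g \<Longrightarrow> g \<le> a+b \<Longrightarrow> g \<in> gen_semigroup {a..a+b}"
  by (rule gen_semigroup.gen) simp

lemma gs_mult: "\<rho> \<le> k \<Longrightarrow> 0 < b \<Longrightarrow> k*a + \<rho> \<in> gen_semigroup {a..a+b}"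
proof (induction k arbitrary: \<rho>)
  case 0 then show ?case by (simp add: gen_semigroup.zero)
next
  case (Suc k)
  show ?case
  proof (cases "\<rho> \<le> k")
    case True
    then have "k*a+\<rho> \<in> gen_semigroup {a..a+b}" using Suc by blast
    from gen_semigroup.add[OF this gs_gen[of a a b]] show ?thesis by (simp add: add.commute add.left_commute)
  next
    case False
    then have r: "\<rho> = Suc k" using Suc by simp
    have "k*a+k \<in> gen_semigroup {a..a+b}" using Suc by blast
    from gen_semigroup.add[OF this gs_gen[of a "a+1" b]] Suc(3) r show ?thesis by (simp add: ac_simps)
  qed
qed

lemma gs_cofinite: assumes "0 < b" "0 < a" "a*a \<le> n" shows "n \<in> gen_semigroup {a..a+b}"
proof -
  have "n = (n div a)*a + n mod a" by simp
  moreover have "n mod a \<le> n div a"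
  proof -
    have "n mod a < a" using assms by simp
    moreover have "a \<le> n div a" using assms
      by (metis div_le_mono nonzero_mult_div_cancel_right not_gr0)
    ultimately show ?thesis by simp
  qed
  ultimately show ?thesis using gs_mult[of "n mod a" "n div a" b a] assms by metis
qed

lemma conductor_prop: assumes "0 < b" "0 < a"
  shows "\<forall>n\<ge>conductor (interval_semigroup a b). n \<in> interval_semigroup a b"
  unfolding conductor_def
  apply (rule LeastI_ex)
  using gs_cofinite[OF assms] unfolding interval_semigroup_def by blast

definition wt :: "nat \<Rightarrow> nat \<Rightarrow> nat \<Rightarrow> nat" where
  "wt G b d = d mod G + (d div G) * b"

lemma divmod_eq: fixes x G q :: nat assumes "x < G" shows "(q*G + x) div G = q \<and> (q*G + x) mod G = x"
proof -
  have "G \<noteq> 0" using assms by simp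
  then show ?thesis using assms by (simp add: add.commute[of "q*G"])
qed

lemma wt_gen: assumes "0 < b" "a \<le> g" "g \<le> a+b" shows "wt (a+b) b d \<le> wt (a+b) b (d+g)"
proof -
  let ?G = "a+b"
  define q x where "q = d div ?G" and "x = d mod ?G"
  have x: "x < ?G" using assms unfolding x_def by simp
  have d: "d = q*?G + x" unfolding q_def x_def using div_mult_mod_eq[of d ?G] by simp
  show ?thesis
  proof (cases "x + g < ?G")
    case True
    have e: "d + g = q*?G + (x+g)" using d by simp
    show ?thesis unfolding wt_def e using divmod_eq[OF True, of q] divmod_eq[OF x, of q] d by simp
  next
    case False
    have e: "d + g = (Suc q)*?G + (x+g-?G)" using d False by simp
    have "x+g-?G < ?G" using x assms by simp
    from divmod_eq[OF this, of "Suc q"] divmod_eq[OF x, of q] d False assms show ?thesis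
      unfolding wt_def e by (simp add: algebra_simps)
  qed
qed

lemma wt_mono: assumes "g \<in> gen_semigroup {a..a+b}" "0 < b"
  shows "wt (a+b) b d \<le> wt (a+b) b (d+g)"
  using assms(1)
proof (induction arbitrary: d)
  case zero then show ?case by simp
next
  case (gen g) then show ?case using wt_gen[OF assms(2)] by simp
next
  case (add x y)
  then show ?case by (metis add.assoc le_trans)
qed


lemma closed_succ_all:
  fixes C :: "nat set" and G :: nat
  assumes "\<forall>y\<in>C. (y+1) mod G \<in> C" "x0 \<in> C" "x0 < G"
  shows "{..<G} \<subseteq> C"
proof -
  have n: "(x0 + n) mod G \<in> C" for n
  proof (induction n)
    case 0 then show ?case using assms by simp
  next
    case (Suc n)
    from assms(1) Suc have "((x0+n) mod G + 1) mod G \<in> C" by blast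
    then show ?case by (simp add: mod_Suc_eq)
  qed
  show ?thesis
  proof
    fix y assume "y \<in> {..<G}"
    then have "(x0 + (G - x0 + y)) mod G = y" using assms(3) by simp
    then show "y \<in> C" using n by metis
  qed
qed

lemma cyc:
  fixes G b :: nat and A B :: "nat set"
  assumes "B \<subseteq> {..<G}" "A \<subseteq> {..<G}" "B \<noteq> {}" "card A < G"
    and cl: "\<forall>x\<in>B. \<forall>e\<le>b. (x+e) mod G \<in> A"
  shows "card B + b \<le> card A"
proof -
  define C where "C k = {(x+e) mod G | x e. x\<in>B \<and> e \<le> k}" for k
  have G0: "0 < G" using assms(1,3) by auto
  have Csub: "C k \<subseteq> {..<G}" for k using G0 unfolding C_def by auto
  have fin: "finite (C k)" for k using Csub finite_subset by blast
  have CA: "k \<le> b \<Longrightarrow> C k \<subseteq> A" for k using cl unfolding C_def by auto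
  have C0: "C 0 = B"
  proof
    show "C 0 \<subseteq> B" unfolding C_def using assms(1) by auto
    show "B \<subseteq> C 0" unfolding C_def using assms(1) by force
  qed
  have main: "k \<le> b \<Longrightarrow> card B + k \<le> card (C k)" for k
  proof (induction k)
    case 0 then show ?case using C0 by simp
  next
    case (Suc k)
    have sub: "C k \<subseteq> C (Suc k)" unfolding C_def by fastforce
    have ne: "C k \<noteq> C (Suc k)"
    proof
      assume eq: "C k = C (Suc k)"
      have "\<forall>y\<in>C k. (y+1) mod G \<in> C k"
      proof
        fix y assume "y \<in> C k"
        then obtain x e where xe: "x \<in> B" "e \<le> k" "y = (x+e) mod G" unfolding C_def by blast
        then have "(y+1) mod G = (x + Suc e) mod G" by (simp add: mod_Suc_eq)
        then have "(y+1) mod G \<in> C (Suc k)" using xe unfolding C_def by fastforce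
        then show "(y+1) mod G \<in> C k" using eq by simp
      qed
      moreover obtain x0 where "x0 \<in> B" using assms(3) by blast
      moreover have "x0 \<in> C k" using calculation(2) C0 sub
        unfolding C_def using assms(1) by force
      ultimately have "{..<G} \<subseteq> C k" using closed_succ_all assms(1) by blast
      moreover have "C k \<subseteq> A" using CA Suc.prems by simp
      ultimately have "{..<G} \<subseteq> A" by blast
      then have "G \<le> card A" using assms(2) by (metis card_lessThan card_mono finite_lessThan finite_subset)
      then show False using assms(4) by simp
    qed
    have "card (C k) < card (C (Suc k))" using sub ne fin psubset_card_mono by blast
    then show ?case using Suc by simp
  qed
  have "card B + b \<le> card (C b)" using main by simp
  also have "\<dots> \<le> card A" using CA[of b] assms(2) by (meson card_mono finite_lessThan finite_subset order_refl)
  finally show ?thesis .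
qed


definition lay :: "nat \<Rightarrow> nat \<Rightarrow> nat set \<Rightarrow> nat \<Rightarrow> nat set" where
  "lay m G X q = {x. x < G \<and> m + q*G + x \<in> X}"

lemma lay_fin: "finite (lay m G X q)" unfolding lay_def by auto

locale lset =
  fixes a b m :: nat and M :: "nat set"
  assumes b0: "0 < b" and ba: "b < a"
    and cl: "\<And>x s. x \<in> M \<Longrightarrow> s \<in> gen_semigroup {a..a+b} \<Longrightarrow> s + m \<le> x \<Longrightarrow> x - s \<in> M"
begin

abbreviation "G \<equiv> a + b"

lemma lay_mono: "lay m G M (Suc q) \<subseteq> lay m G M q"
proof
  fix x assume "x \<in> lay m G M (Suc q)"
  then have x: "x < G" "m + Suc q * G + x \<in> M" unfolding lay_def by auto
  have "m + Suc q * G + x - G \<in> M" using cl[OF x(2) gs_gen[of a G b]] by simp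
  then show "x \<in> lay m G M q" using x unfolding lay_def by (simp add: algebra_simps)
qed

lemma lay_le0: "lay m G M q \<subseteq> lay m G M 0"
  by (induction q) (use lay_mono in auto)

lemma lay_cl: assumes "x \<in> lay m G M (Suc q)" "e \<le> b" shows "(x+e) mod G \<in> lay m G M q"
proof -
  from assms have x: "x < G" "m + Suc q * G + x \<in> M" unfolding lay_def by auto
  let ?s = "a + (b - e)"
  have s: "?s \<in> gen_semigroup {a..a+b}" by (rule gs_gen) auto
  have "?s + m \<le> m + Suc q * G + x" by simp
  from cl[OF x(2) s this] have y: "m + Suc q * G + x - ?s \<in> M" .
  have eq: "m + Suc q * G + x - ?s = m + q*G + (x + e)" using assms(2) by (simp add: algebra_simps)
  show ?thesis
  proof (cases "x + e < G")
    case True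
    then show ?thesis using y eq unfolding lay_def by simp
  next
    case False
    have lt: "x + e - G < G" using x assms(2) by simp
    have "m + Suc q * G + (x+e-G) \<in> M" using y eq False by (simp add: algebra_simps)
    then have "x+e-G \<in> lay m G M (Suc q)" using lt unfolding lay_def by simp
    then have "x+e-G \<in> lay m G M q" using lay_mono by blast
    moreover have "(x+e) mod G = x+e-G" using False lt
      by (metis le_add_diff_inverse2 mod_add_self2 mod_less not_less)
    ultimately show ?thesis by simp
  qed
qed

lemma lay_bound: assumes "card (lay m G M 0) < G"
  shows "card (lay m G M q) \<le> card (lay m G M 0) - q*b"
proof (induction q)
  case 0 then show ?case by simp
next
  case (Suc q)
  show ?case
  proof (cases "lay m G M (Suc q) = {}")
    case True then show ?thesis by simp
  next
    case False
    have "card (lay m G M (Suc q)) + b \<le> card (lay m G M q)"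
    proof (rule cyc)
      show "lay m G M (Suc q) \<subseteq> {..<G}" "lay m G M q \<subseteq> {..<G}" unfolding lay_def by auto
      show "lay m G M (Suc q) \<noteq> {}" by fact
      show "card (lay m G M q) < G" using card_mono[OF lay_fin lay_le0[of q]] assms by simp
      show "\<forall>x\<in>lay m G M (Suc q). \<forall>e\<le>b. (x + e) mod G \<in> lay m G M q" using lay_cl by blast
    qed
    then show ?thesis using Suc.IH by simp
  qed
qed

end

lemma split_card:
  fixes X :: "nat set"
  assumes "0 < G"
  shows "card (X \<inter> {m..<m + Suc Q * G}) = card (X \<inter> {m..<m + Q*G}) + card (lay m G X Q)"
proof -
  have eq: "X \<inter> {m..<m + Suc Q * G} = (X \<inter> {m..<m + Q*G}) \<union> ((\<lambda>x. m + Q*G + x) ` lay m G X Q)"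
  proof (rule set_eqI)
    fix y
    show "y \<in> X \<inter> {m..<m + Suc Q * G} \<longleftrightarrow> y \<in> (X \<inter> {m..<m + Q*G}) \<union> ((\<lambda>x. m + Q*G + x) ` lay m G X Q)"
    proof
      assume y: "y \<in> X \<inter> {m..<m + Suc Q * G}"
      show "y \<in> (X \<inter> {m..<m + Q*G}) \<union> ((\<lambda>x. m + Q*G + x) ` lay m G X Q)"
      proof (cases "y < m + Q*G")
        case True then show ?thesis using y by auto
      next
        case False
        then have "y = m + Q*G + (y - m - Q*G)" "y - m - Q*G < G" using y by auto
        then show ?thesis using y unfolding lay_def by (metis (mono_tags, lifting) IntD1 image_eqI mem_Collect_eq UnI2)
      qed
    next
      assume "y \<in> (X \<inter> {m..<m + Q*G}) \<union> ((\<lambda>x. m + Q*G + x) ` lay m G X Q)"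
      then show "y \<in> X \<inter> {m..<m + Suc Q * G}" unfolding lay_def by auto
    qed
  qed
  have disj: "(X \<inter> {m..<m + Q*G}) \<inter> ((\<lambda>x. m + Q*G + x) ` lay m G X Q) = {}" by auto
  have "card ((\<lambda>x. m + Q*G + x) ` lay m G X Q) = card (lay m G X Q)"
    by (rule card_image) (simp add: inj_on_def)
  then show ?thesis unfolding eq using disj lay_fin
    by (simp add: card_Un_disjoint)
qed


theorem proposition4p26:
  fixes a b m r :: nat and M :: "nat set"
  assumes "0 < b" and "b < a"
    and "2 * conductor (interval_semigroup a b) \<le> m + 1"
    and "amenable (interval_semigroup a b) m r M"
  shows "\<exists>T. amenable (interval_semigroup a b) m r T \<and>
             (\<exists>k. m \<le> k \<and> shadow a b m T = {m..k}) \<and>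
             card (shadow a b m T) \<le> card (shadow a b m M)"
proof -
  let ?S = "interval_semigroup a b"
  let ?G = "a + b"
  have Sdef: "?S = gen_semigroup {a..a+b}" unfolding interval_semigroup_def ..
  from assms(4) have finM: "finite M" and cardM: "card M = r" and MS: "M \<subseteq> ?S" and mM: "m \<in> M"
    and Mge: "\<forall>x\<in>M. m \<le> x" and Mcl: "\<forall>x\<in>M. Dset ?S x \<inter> {m..} \<subseteq> M"
    unfolding amenable_def by auto
  have cm: "conductor ?S \<le> m" using assms(3) by simp
  have allS: "\<And>n. m \<le> n \<Longrightarrow> n \<in> ?S" using conductor_prop[OF assms(1)] assms(2) cm by auto
  have cl: "x - s \<in> M" if "x \<in> M" "s \<in> gen_semigroup {a..a+b}" "s + m \<le> x" for x s
  proof -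
    have "x - s \<in> Dset ?S x \<inter> {m..}" unfolding Dset_def using that allS[of "x-s"] Sdef by auto
    then show ?thesis using Mcl that(1) by blast
  qed
  interpret lset a b m M using assms(1,2) cl by unfold_locales auto
  have G0: "0 < ?G" using assms by simp
  have r1: "1 \<le> r" using finM mM cardM by (metis One_nat_def Suc_leI card_gt_0_iff empty_iff)
  define t where "t = card (shadow a b m M)"
  have t_lay: "t = card (lay m ?G M 0)"
    using split_card[OF G0, of M m 0] unfolding t_def shadow_def by (simp add: add.assoc)
  have tG: "t \<le> ?G"
  proof -
    have "shadow a b m M \<subseteq> {m..<m+a+b}" unfolding shadow_def by auto
    then show ?thesis unfolding t_def using card_mono[of "{m..<m+a+b}"] by fastforce
  qed
  have t1: "1 \<le> t"
  proof -
    have "m \<in> shadow a b m M" unfolding shadow_def using mM G0 by auto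
    moreover have "finite (shadow a b m M)" unfolding shadow_def by auto
    ultimately show ?thesis unfolding t_def by (metis One_nat_def Suc_leI card_gt_0_iff empty_iff)
  qed
  show ?thesis
  proof (cases "t = ?G")
    case True
    define T where "T = {m..<m+r}"
    have am: "amenable ?S m r T"
      unfolding amenable_def T_def
      using r1 allS assms(3) by (auto simp: Dset_def)
    have sh: "shadow a b m T = {m..m + min r ?G - 1}"
      unfolding shadow_def T_def using r1 G0 by auto
    have "card (shadow a b m T) \<le> t" unfolding sh using True r1 G0 by simp
    moreover have "m \<le> m + min r ?G - 1" using r1 G0 by (simp add: min_def) arith
    ultimately show ?thesis using am sh unfolding t_def by blast
  next
    case False
    then have tG': "t < ?G" using tG by simp
    define J where "J = {y. m \<le> y \<and> wt ?G b (y - m) < t}"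
    have layJ: "lay m ?G J q = {..< t - q*b}" for q
    proof -
      have "x \<in> lay m ?G J q \<longleftrightarrow> x < t - q*b" for x
      proof -
        have "x \<in> lay m ?G J q \<longleftrightarrow> x < ?G \<and> wt ?G b (q*?G + x) < t"
          unfolding lay_def J_def by (simp add: algebra_simps)
        also have "\<dots> \<longleftrightarrow> x < ?G \<and> x + q*b < t"
          using divmod_eq[of x ?G q] unfolding wt_def by auto
        also have "\<dots> \<longleftrightarrow> x < t - q*b" using tG' by auto
        finally show ?thesis .
      qed
      then show ?thesis by auto
    qed
    have cardQ: "card (M \<inter> {m..<m+Q*?G}) \<le> card (J \<inter> {m..<m+Q*?G})" for Q
    proof (induction Q)
      case 0 then show ?case by simp
    next
      case (Suc Q)
      have "card (lay m ?G M Q) \<le> t - Q*b" using lay_bound[of Q] tG' t_lay by simp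
      also have "\<dots> = card (lay m ?G J Q)" using layJ by simp
      finally show ?case using Suc split_card[OF G0, of M m Q] split_card[OF G0, of J m Q] by simp
    qed
    define Q where "Q = Suc (Max M)"
    have "M \<subseteq> {m..<m+Q*?G}"
    proof
      fix x assume x: "x \<in> M"
      have "x \<le> Max M" using finM x by simp
      moreover have "Q \<le> Q * ?G" using G0 by simp linarith
      ultimately show "x \<in> {m..<m+Q*?G}" using Mge x unfolding Q_def by auto
    qed
    then have "r \<le> card (J \<inter> {m..<m+Q*?G})" using cardQ[of Q] cardM by (simp add: Int_absorb2)
    also have "\<dots> \<le> card (J \<inter> {m..m+Q*?G})" by (rule card_mono) auto
    finally have ex: "r \<le> card (J \<inter> {m..m+Q*?G})" .
    define f where "f K = card (J \<inter> {m..K})" for K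
    define K0 where "K0 = (LEAST K. r \<le> f K)"
    have fK0: "r \<le> f K0" unfolding K0_def f_def by (rule LeastI[of _ "m+Q*?G"]) (use ex in simp)
    have fstep: "f (Suc K) \<le> f K + 1" for K
    proof -
      have "J \<inter> {m..Suc K} \<subseteq> insert (Suc K) (J \<inter> {m..K})" by auto
      then have "f (Suc K) \<le> card (insert (Suc K) (J \<inter> {m..K}))" unfolding f_def by (intro card_mono) auto
      also have "\<dots> \<le> f K + 1" unfolding f_def by (simp add: card_insert_if)
      finally show ?thesis .
    qed
    have K0m: "m \<le> K0"
    proof (rule ccontr)
      assume "\<not> m \<le> K0"
      then have "f K0 = 0" unfolding f_def by auto
      then show False using fK0 r1 by simp
    qed
    have fK0eq: "f K0 = r"
    proof (cases K0)
      case 0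
      have "f 0 \<le> 1"
      proof -
        have "J \<inter> {m..0} \<subseteq> {0}" by auto
        then show ?thesis unfolding f_def by (metis card_mono card.empty card.insert finite.intros(1) insert_absorb2 finite_insert
              empty_iff One_nat_def)
      qed
      then show ?thesis using fK0 r1 0 by simp
    next
      case (Suc K')
      have "\<not> r \<le> f K'" unfolding K0_def
        using not_less_Least[of K' "\<lambda>K. r \<le> f K"] Suc K0_def by simp
      then show ?thesis using fstep[of K'] fK0 Suc by simp
    qed
    define T where "T = J \<inter> {m..K0}"
    have am: "amenable ?S m r T"
      unfolding amenable_def
    proof (intro conjI)
      show "finite T" unfolding T_def by simp
      show "card T = r" using fK0eq unfolding T_def f_def .
      show "T \<subseteq> ?S" unfolding T_def J_def using allS by auto
      show "m \<in> T" unfolding T_def J_def using K0m t1 by (simp add: wt_def)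
      show "\<forall>x\<in>T. m \<le> x" unfolding T_def J_def by auto
      show "2 * conductor ?S \<le> m + 1" by fact
      show "\<forall>x\<in>T. Dset ?S x \<inter> {m..} \<subseteq> T"
      proof (intro ballI subsetI)
        fix x \<alpha> assume x: "x \<in> T" and al: "\<alpha> \<in> Dset ?S x \<inter> {m..}"
        then have a1: "\<alpha> \<le> x" "x - \<alpha> \<in> gen_semigroup {a..a+b}" "m \<le> \<alpha>" unfolding Dset_def Sdef by auto
        have "wt ?G b (\<alpha> - m) \<le> wt ?G b (\<alpha> - m + (x - \<alpha>))" by (rule wt_mono[OF a1(2) assms(1)])
        also have "\<alpha> - m + (x - \<alpha>) = x - m" using a1 by simp
        finally show "\<alpha> \<in> T" using x a1 unfolding T_def J_def by auto
      qed
    qed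
    have sh: "shadow a b m T = {m..min K0 (m+t-1)}"
    proof (rule set_eqI)
      fix y
      have "y \<in> shadow a b m T \<longleftrightarrow> m \<le> y \<and> y \<le> K0 \<and> y < m + ?G \<and> wt ?G b (y - m) < t"
        unfolding shadow_def T_def J_def by auto
      also have "\<dots> \<longleftrightarrow> m \<le> y \<and> y \<le> K0 \<and> y - m < t"
      proof -
        have "y - m < ?G \<Longrightarrow> wt ?G b (y - m) = y - m" unfolding wt_def by simp
        then show ?thesis using tG' by auto
      qed
      also have "\<dots> \<longleftrightarrow> y \<in> {m..min K0 (m+t-1)}" using t1 by auto
      finally show "y \<in> shadow a b m T \<longleftrightarrow> y \<in> {m..min K0 (m+t-1)}" .
    qed
    have "card (shadow a b m T) \<le> t" unfolding sh using t1 by simp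
    moreover have "m \<le> min K0 (m+t-1)" using K0m t1 by (simp add: min_def) arith
    ultimately show ?thesis using am sh unfolding t_def by blast
  qed
qed

end
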